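(* Let $f:\mathcal X^n\to\mathcal T$, let $L:\mathcal T\times\mathcal T\to\mathbb R_+$ be a loss, $\varepsilon>0$, and let $M$ be an $L$-unbiased, $\varepsilon$-differentially private mechanism with values in $\mathcal T$. Then for all $x,x'\in\mathcal X^n$, $$\mathbb E[L(M(x),f(x))]\le e^{d_H(x,x')\varepsilon}\,\mathbb E[L(M(x'),f(x'))].$$
   Context: $d_H$ is the Hamming distance on $\mathcal X^n$; neighboring means $d_H\le1$. $M$ is $\varepsilon$-differentially private if $\mathbb P(M(x)\in S)\le e^\varepsilon\mathbb P(M(x')\in S)$ for all neighboring $x,x'$ and measurable $S$. $M$ is $L$-unbiased if $\mathbb E[L(M(x),f(x))]\le\mathbb E[L(M(x),t)]$ for all $x\in\mathcal X^n$, $t\in\mathcal T$. *)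

theory Defs
  imports "HOL-Probability.Probability"
begin

text \<open>Datasets in X^n are lists of length n over the type 'a (the data universe X).\<close>

definition hamming :: "'a list \<Rightarrow> 'a list \<Rightarrow> nat" where
  "hamming x y = card {i. i < length x \<and> x ! i \<noteq> y ! i}"

definition is_mechanism :: "nat \<Rightarrow> 'b measure \<Rightarrow> ('a list \<Rightarrow> 'b measure) \<Rightarrow> bool" where
  "is_mechanism n T M \<longleftrightarrow>
     (\<forall>x. length x = n \<longrightarrow> prob_space (M x) \<and> sets (M x) = sets T)"

definition differentially_private ::
    "nat \<Rightarrow> 'b measure \<Rightarrow> real \<Rightarrow> ('a list \<Rightarrow> 'b measure) \<Rightarrow> bool" where
  "differentially_private n T \<epsilon> M \<longleftrightarrow>
     (\<forall>x x'. length x = n \<longrightarrow> length x' = n \<longrightarrow> hamming x x' \<le> 1 \<longrightarrow>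
        (\<forall>S \<in> sets T. measure (M x) S \<le> exp \<epsilon> * measure (M x') S))"

definition expected_loss ::
    "('a list \<Rightarrow> 'b measure) \<Rightarrow> ('b \<Rightarrow> 'b \<Rightarrow> real) \<Rightarrow> 'a list \<Rightarrow> 'b \<Rightarrow> ennreal" where
  "expected_loss M L x t = (\<integral>\<^sup>+ y. ennreal (L y t) \<partial>M x)"

definition unbiased ::
    "nat \<Rightarrow> 'b measure \<Rightarrow> ('b \<Rightarrow> 'b \<Rightarrow> real) \<Rightarrow> ('a list \<Rightarrow> 'b) \<Rightarrow> ('a list \<Rightarrow> 'b measure) \<Rightarrow> bool" where
  "unbiased n T L f M \<longleftrightarrow>
     (\<forall>x. length x = n \<longrightarrow> (\<forall>t \<in> space T. expected_loss M L x (f x) \<le> expected_loss M L x t))"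

end

theory Submission
  imports Defs
begin

lemma group_dp:
  assumes dp: "differentially_private n T \<epsilon> M" and eps: "\<epsilon> \<ge> 0"
  shows "\<And>x. length x = n \<Longrightarrow> length x' = n \<Longrightarrow> hamming x x' = d \<Longrightarrow> S \<in> sets T \<Longrightarrow>
     measure (M x) S \<le> exp (real d * \<epsilon>) * measure (M x') S"
proof (induction d)
  case 0
  have "{i. i < length x \<and> x ! i \<noteq> x' ! i} = {}"
    using 0 by (simp add: hamming_def)
  hence "x = x'" using 0 by (auto intro: nth_equalityI)
  thus ?case by simp
next
  case (Suc d)
  let ?D = "{i. i < length x \<and> x ! i \<noteq> x' ! i}"
  have fin: "finite ?D" by simp
  have "card ?D = Suc d" using Suc by (simp add: hamming_def)
  then obtain i where i: "i \<in> ?D" by (metis card.empty ex_in_conv nat.distinct(1))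
  define y where "y = x[i := x' ! i]"
  have ly: "length y = n" using Suc by (simp add: y_def)
  have "{j. j < length x \<and> x ! j \<noteq> y ! j} \<subseteq> {i}"
    using i by (auto simp: y_def nth_list_update)
  hence "card {j. j < length x \<and> x ! j \<noteq> y ! j} \<le> 1"
    by (metis card.empty card_insert_disjoint card_mono empty_iff finite.emptyI finite.insertI One_nat_def)
  hence h1: "hamming x y \<le> 1" by (simp add: hamming_def)
  have "{j. j < length y \<and> y ! j \<noteq> x' ! j} = ?D - {i}"
    using i by (auto simp: y_def nth_list_update)
  hence "hamming y x' = d" using i fin \<open>card ?D = Suc d\<close>
    by (simp add: hamming_def)
  hence IH: "measure (M y) S \<le> exp (real d * \<epsilon>) * measure (M x') S"
    using Suc ly by blast
  have "measure (M x) S \<le> exp \<epsilon> * measure (M y) S"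
    using dp Suc h1 ly unfolding differentially_private_def by blast
  also have "\<dots> \<le> exp \<epsilon> * (exp (real d * \<epsilon>) * measure (M x') S)"
    using IH by (intro mult_left_mono) auto
  also have "\<dots> = exp (real (Suc d) * \<epsilon>) * measure (M x') S"
    by (simp add: exp_add[symmetric] algebra_simps)
  finally show ?case .
qed

theorem lemmaA2:
  fixes n :: nat and T :: "'b measure" and f :: "'a list \<Rightarrow> 'b"
    and L :: "'b \<Rightarrow> 'b \<Rightarrow> real" and \<epsilon> :: real and M :: "'a list \<Rightarrow> 'b measure"
  assumes f_range: "\<And>x. length x = n \<Longrightarrow> f x \<in> space T"
    and L_nonneg: "\<And>s t. s \<in> space T \<Longrightarrow> t \<in> space T \<Longrightarrow> L s t \<ge> 0"
    and L_meas: "\<And>t. t \<in> space T \<Longrightarrow> (\<lambda>s. L s t) \<in> borel_measurable T"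
    and eps_pos: "\<epsilon> > 0"
    and mech: "is_mechanism n T M"
    and unb: "unbiased n T L f M"
    and dp: "differentially_private n T \<epsilon> M"
    and x: "length x = n" and x': "length x' = n"
  shows "expected_loss M L x (f x) \<le> ennreal (exp (real (hamming x x') * \<epsilon>)) * expected_loss M L x' (f x')"
proof -
  define c where "c = exp (real (hamming x x') * \<epsilon>)"
  have c0: "c \<ge> 0" by (simp add: c_def)
  have px: "prob_space (M x)" and sx: "sets (M x) = sets T"
    using mech x by (auto simp: is_mechanism_def)
  have px': "prob_space (M x')" and sx': "sets (M x') = sets T"
    using mech x' by (auto simp: is_mechanism_def)
  define N where "N = density (M x') (\<lambda>_. ennreal c)"
  have sN: "sets N = sets (M x)" using sx sx' by (simp add: N_def)
  have E: "emeasure (M x) S \<le> emeasure N S" for S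
  proof (cases "S \<in> sets T")
    case True
    have "measure (M x) S \<le> c * measure (M x') S"
      using group_dp[OF dp _ x x' refl True] eps_pos by (simp add: c_def)
    hence "ennreal (measure (M x) S) \<le> ennreal (c * measure (M x') S)"
      by (rule ennreal_leI)
    moreover have "emeasure (M x) S = ennreal (measure (M x) S)"
      using px by (simp add: prob_space_def finite_measure.emeasure_eq_measure)
    moreover have "emeasure N S = ennreal c * emeasure (M x') S"
      using True sx' unfolding N_def by (simp add: emeasure_density_const)
    moreover have "emeasure (M x') S = ennreal (measure (M x') S)"
      using px' by (simp add: prob_space_def finite_measure.emeasure_eq_measure)
    ultimately show ?thesis using c0 by (simp add: ennreal_mult)
  next
    case False
    hence "S \<notin> sets (M x)" using sx by simp
    thus ?thesis by (simp add: emeasure_notin_sets)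
  qed
  have sp: "space (M x) = space N" using sN by (rule sets_eq_imp_space_eq[symmetric])
  have EE: "emeasure (M x) \<le> emeasure N" using E by (simp add: le_fun_def)
  have le: "M x \<le> N"
    by (subst le_measure_iff) (simp only: sp sN simp_thms if_True EE)
  have meas: "(\<lambda>y. ennreal (L y (f x'))) \<in> borel_measurable (M x')"
  proof -
    have "(\<lambda>s. L s (f x')) \<in> borel_measurable (M x')"
      by (subst measurable_cong_sets[OF sx' refl]) (rule L_meas[OF f_range[OF x']])
    thus ?thesis by (rule measurable_compose[OF _ measurable_ennreal])
  qed
  have "expected_loss M L x (f x) \<le> expected_loss M L x (f x')"
    using unb x f_range[OF x'] unfolding unbiased_def by blast
  also have "\<dots> \<le> (\<integral>\<^sup>+ y. ennreal (L y (f x')) \<partial>N)"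
    unfolding expected_loss_def by (rule nn_integral_mono_measure[OF sN[symmetric] le])
  also have "\<dots> = (\<integral>\<^sup>+ y. ennreal c * ennreal (L y (f x')) \<partial>M x')"
    unfolding N_def using meas by (simp add: nn_integral_density)
  also have "\<dots> = ennreal c * expected_loss M L x' (f x')"
    unfolding expected_loss_def using meas by (simp add: nn_integral_cmult)
  finally show ?thesis by (simp add: c_def)
qed

end
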